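(* Consider a two-user ($N=2$) multi-hop decode-and-forward relay network with $L\ge 2$ hops and a fixed relay assignment, with powers, SINRs and sum-rate as defined in the context. Then there exists a power allocation $\mathbf{P}^*\in[0,P]^{2L}$ maximizing the sum-rate $R(\mathbf{P})$ over $[0,P]^{2L}$ such that (i) at least two of the $2L$ transmit powers $P^*_{i,l}$ are binary, i.e., belong to $\{0,P\}$, and (ii) the remaining transmit powers are determined by SINR matching, i.e., by the equalities $\gamma_{i,1}(\mathbf{P}^* )=\gamma_{i,l}(\mathbf{P}^* )$ for all $i\in\{1,2\}$ and all $l\in\{2,\dots,L\}$.
   Context: Setup: there are two source–destination (S-D) pairs (users) $i\in\{1,2\}$, whose information travels over $L$ hops. For a fixed relay assignment, user $i$ uses a path of nodes $r_{i,0},r_{i,1},\dots,r_{i,L}$ (source $r_{i,0}$, destination $r_{i,L}$, distinct relays of the two users in each intermediate hop). In hop $l\in\{1,\dots,L\}$ the two transmitting nodes $r_{1,l-1},r_{2,l-1}$ transmit simultaneously with powers $P_{1,l-1},P_{2,l-1}\in[0,P]$, where $P>0$ is the maximum transmit power. Let $g_{j,i,l}=|h[r_{j,l-1},r_{i,l},l]|^2>0$ denote the channel power gain from the transmitter of user $j$ to the receiver of user $i$ in hop $l$, and let $\sigma^2>0$ be the noise variance. The SINR of user $i$ in hop $l$ (interference treated as noise, $j\neq i$ the other user) is $\gamma_{i,l}(\mathbf{P})=\dfrac{P_{i,l-1}\,g_{i,i,l}}{\sigma^2+P_{j,l-1}\,g_{j,i,l}}$. The end-to-end SINR of user $i$ is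 $\min_{l\in\{1,\dots,L\}}\gamma_{i,l}$ and the sum-rate is $R(\mathbf{P})=\sum_{i=1}^{2}\log_2(1+\min_{l}\gamma_{i,l}(\mathbf{P}))$. SINR matching means choosing the powers along each user's path so that the SINRs of that user at all receiving nodes of its path are equal. *)

theory Defs
  imports Complex_Main
begin

text \<open>A power allocation is p :: nat => nat => real, where p i k is the power of the
  transmitter of user i in hop k+1 (i.e. P_{i,k}, k = 0..L-1).
  Channel gains: g j i l = g_{j,i,l} (transmitter of user j to receiver of user i in hop l).\<close>

definition other_user :: "nat \<Rightarrow> nat" where
  "other_user i = 3 - i"

definition sinr :: "(nat \<Rightarrow> nat \<Rightarrow> nat \<Rightarrow> real) \<Rightarrow> real \<Rightarrow> (nat \<Rightarrow> nat \<Rightarrow> real) \<Rightarrow> nat \<Rightarrow> nat \<Rightarrow> real" where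
  "sinr g \<sigma>2 p i l =
     p i (l - 1) * g i i l / (\<sigma>2 + p (other_user i) (l - 1) * g (other_user i) i l)"

definition e2e_sinr :: "nat \<Rightarrow> (nat \<Rightarrow> nat \<Rightarrow> nat \<Rightarrow> real) \<Rightarrow> real \<Rightarrow> (nat \<Rightarrow> nat \<Rightarrow> real) \<Rightarrow> nat \<Rightarrow> real" where
  "e2e_sinr L g \<sigma>2 p i = Min ((\<lambda>l. sinr g \<sigma>2 p i l) ` {1..L})"

definition sum_rate :: "nat \<Rightarrow> (nat \<Rightarrow> nat \<Rightarrow> nat \<Rightarrow> real) \<Rightarrow> real \<Rightarrow> (nat \<Rightarrow> nat \<Rightarrow> real) \<Rightarrow> real" where
  "sum_rate L g \<sigma>2 p = (\<Sum>i\<in>{1,2}. log 2 (1 + e2e_sinr L g \<sigma>2 p i))"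

definition feasible :: "nat \<Rightarrow> real \<Rightarrow> (nat \<Rightarrow> nat \<Rightarrow> real) \<Rightarrow> bool" where
  "feasible L P p \<longleftrightarrow> (\<forall>i\<in>{1,2}. \<forall>k<L. 0 \<le> p i k \<and> p i k \<le> P)"

definition binary_entries :: "nat \<Rightarrow> real \<Rightarrow> (nat \<Rightarrow> nat \<Rightarrow> real) \<Rightarrow> (nat \<times> nat) set" where
  "binary_entries L P p = {(i, k). i \<in> {1,2} \<and> k < L \<and> p i k \<in> {0, P}}"

end

theory Submission
  imports Defs "HOL-Analysis.Analysis"
begin



lemma hop_nec:
  fixes G11 G12 G21 G22 s P a b x y :: real
  assumes g: "G11>0" "G12>0" "G21>0" "G22>0" and s: "s>0"
    and ab: "0\<le>a" "a\<le>P" "0\<le>b" "b\<le>P" and xy: "0\<le>x" "0\<le>y"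
    and hx: "x \<le> a * G11/(s+b * G21)" and hy: "y \<le> b * G22/(s+a * G12)"
  shows "0 \<le> P*(G11 * G22 - x * y * G12 * G21) - s * x*(G22+y * G21)
       \<and> 0 \<le> P*(G11 * G22 - x * y * G12 * G21) - s * y*(G11+x * G12)"
proof -
  have p1: "s+b * G21>0" "s+a * G12>0" using s g ab by (simp_all add: add_pos_nonneg)
  have hx': "x*(s+b * G21) \<le> a * G11" using hx p1 by (simp add: pos_le_divide_eq)
  have hy': "y*(s+a * G12) \<le> b * G22" using hy p1 by (simp add: pos_le_divide_eq)
  let ?D = "G11 * G22 - x * y * G12 * G21"
  have e1: "a*?D \<ge> s * x*(G22+y * G21)"
  proof -
    have "a * G11 * G22 \<ge> x*(s+b * G21) * G22" using hx' g by (simp add: mult_right_mono)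
    moreover have "x * G21*(b * G22) \<ge> x * G21*(y*(s+a * G12))"
      using hy' xy g by (simp add: mult_left_mono)
    ultimately show ?thesis by (simp add: algebra_simps)
  qed
  have e2: "b*?D \<ge> s * y*(G11+x * G12)"
  proof -
    have "b * G22 * G11 \<ge> y*(s+a * G12) * G11" using hy' g by (simp add: mult_right_mono)
    moreover have "y * G12*(a * G11) \<ge> y * G12*(x*(s+b * G21))"
      using hx' xy g by (simp add: mult_left_mono)
    ultimately show ?thesis by (simp add: algebra_simps)
  qed
  have Dpos: "?D > 0"
  proof (cases "x = 0")
    case True thus ?thesis using g by simp
  next
    case False
    hence "x>0" using xy by simp
    moreover have "G22+y * G21 > 0" using xy g by (simp add: add_pos_nonneg)
    ultimately have "s * x*(G22+y * G21) > 0" using s by simp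
    hence "a*?D > 0" using e1 by linarith
    thus ?thesis using ab by (simp add: zero_less_mult_iff)
  qed
  have "P*?D \<ge> a*?D" "P*?D \<ge> b*?D" using Dpos ab by (simp_all add: mult_right_mono)
  thus ?thesis using e1 e2 by linarith
qed

lemma hop_D:
  fixes G11 G12 G21 G22 s P x y :: real
  assumes g: "G11>0" "G12>0" "G21>0" "G22>0" and s: "s>0" and P: "P>0"
    and xy: "0\<le>x" "0\<le>y" and c: "0 \<le> P*(G11 * G22 - x * y * G12 * G21) - s * x*(G22+y * G21)"
  shows "G11 * G22 - x * y * G12 * G21 > 0"
proof (cases "x = 0")
  case True thus ?thesis using g by simp
next
  case False
  hence "x>0" using xy by simp
    moreover have "G22+y * G21 > 0" using xy g by (simp add: add_pos_nonneg)
    ultimately have "s * x*(G22+y * G21) > 0" using s by simp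
  hence "P*(G11 * G22 - x * y * G12 * G21) > 0" using c by linarith
  thus ?thesis using P by (simp add: zero_less_mult_iff)
qed

lemma hop_suff:
  fixes G11 G12 G21 G22 s P x y :: real
  assumes g: "G11>0" "G12>0" "G21>0" "G22>0" and s: "s>0" and P: "P>0"
    and xy: "0\<le>x" "0\<le>y" and c1: "0 \<le> P*(G11 * G22 - x * y * G12 * G21) - s * x*(G22+y * G21)"
    and c2: "0 \<le> P*(G11 * G22 - x * y * G12 * G21) - s * y*(G11+x * G12)"
    and a: "a = s * x*(G22+y * G21)/(G11 * G22 - x * y * G12 * G21)"
    and b: "b = s * y*(G11+x * G12)/(G11 * G22 - x * y * G12 * G21)"
  shows "0\<le>a \<and> a\<le>P \<and> 0\<le>b \<and> b\<le>P \<and> a * G11/(s+b * G21) = x \<and> b * G22/(s+a * G12) = y"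
proof -
  let ?D = "G11 * G22 - x * y * G12 * G21"
  have D: "?D > 0" using hop_D[OF g s P xy c1] .
  have "0 \<le> a" "0\<le>b" using a b D xy g s by simp_all
  moreover have "a \<le> P" using a D c1 by (simp add: divide_le_eq)
  moreover have "b \<le> P" using b D c2 by (simp add: divide_le_eq)
  moreover have "a * G11 = x*(s+b * G21)"
    using D unfolding a b by (simp add: field_simps; simp add: algebra_simps)
  moreover have "b * G22 = y*(s+a * G12)"
    using D unfolding a b by (simp add: field_simps; simp add: algebra_simps)
  ultimately show ?thesis using s g
    by (metis add_pos_nonneg mult_nonneg_nonneg less_le nonzero_mult_div_cancel_right
        order_less_irrefl)
qed

lemma curve_step:
  fixes K s r c b0 d :: real
  assumes "K>0" "s>0" "r>0" "c>0" "0<d" "d<b0"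
    and h1: "(1+K/(s+r*(b0+d)))*(1+c*(b0+d)) \<le> (1+K/(s+r * b0))*(1+c * b0)"
    and h2: "(1+K/(s+r*(b0-d)))*(1+c*(b0-d)) \<le> (1+K/(s+r * b0))*(1+c * b0)"
  shows False
proof -
  define H where "H = (\<lambda>b::real. (1+K/(s+r * b))*(1+c * b))"
  define Aa where "Aa = c/r"
  define Cc where "Cc = K*(r - c * s)/r"
  have v0: "s+r * b0 > 0" "s + r*(b0+d) > 0" "s+r*(b0-d)>0" using assms
    by (simp_all add: add_pos_pos)
  have rep: "H b = Aa*(s+r * b) + (r - c * s + c * K)/r + Cc/(s+r * b)" if "s+r * b > 0" for b
  proof -
    have gen: "(1+K/v)*(1+c*((v-s)/r)) = c/r * v + (r - c * s + c * K)/r + K*(r - c * s)/r/v"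
      if "v \<noteq> 0" for v using that assms by (simp add: field_simps; simp add: algebra_simps)
    have "b = ((s+r * b)-s)/r" using assms by simp
    hence "H b = (1+K/(s+r * b))*(1+c*(((s+r * b)-s)/r))" unfolding H_def by simp
    also have "\<dots> = Aa*(s+r * b) + (r - c * s + c * K)/r + Cc/(s+r * b)"
      unfolding Aa_def Cc_def by (rule gen) (use that in auto)
    finally show ?thesis .
  qed
  have id: "H b - H b0 = (r * b - r * b0)*(Aa - Cc/((s+r * b)*(s+r * b0)))" if "s+r * b > 0" for b
  proof -
    define Q where "Q = (s+r * b)*(s+r * b0)"
    have "H b - H b0 = Aa*(r * b-r * b0) + Cc*(1/(s+r * b) - 1/(s+r * b0))"
      using rep[OF that] rep[OF v0(1)] by (simp add: algebra_simps)
    also have "1/(s+r * b) - 1/(s+r * b0) = -(r * b-r * b0)/Q"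
      using that v0 unfolding Q_def by (simp add: field_simps)
    finally have "H b - H b0 = Aa*(r * b-r * b0) + Cc*(-(r * b-r * b0)/Q)" .
    thus ?thesis unfolding Q_def[symmetric] by (simp add: algebra_simps diff_divide_distrib)
  qed
  have "(r * d)*(Aa - Cc/((s+r*(b0+d))*(s+r * b0))) \<le> 0"
    using id[OF v0(2)] h1 unfolding H_def by (simp add: algebra_simps)
  hence q1: "Aa \<le> Cc/((s+r*(b0+d))*(s+r * b0))" using assms
    by (simp add: mult_le_0_iff)
  have "(-(r * d))*(Aa - Cc/((s+r*(b0-d))*(s+r * b0))) \<le> 0"
    using id[OF v0(3)] h2 unfolding H_def by (simp add: algebra_simps)
  hence "0 \<le> (r * d)*(Aa - Cc/((s+r*(b0-d))*(s+r * b0)))" by simp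
  moreover have "r * d > 0" using assms by simp
  ultimately have q2: "Aa \<ge> Cc/((s+r*(b0-d))*(s+r * b0))"
    by (simp add: zero_le_mult_iff)
  have p1: "Aa*((s+r*(b0+d))*(s+r * b0)) \<le> Cc" using q1 v0 by (simp add: le_divide_eq)
  have p2: "Aa*((s+r*(b0-d))*(s+r * b0)) \<ge> Cc" using q2 v0 by (simp add: divide_le_eq)
  have "Aa > 0" using assms unfolding Aa_def by simp
  hence "Aa*((s+r*(b0-d))*(s+r * b0)) < Aa*((s+r*(b0+d))*(s+r * b0))"
    using v0 assms by (intro mult_strict_left_mono mult_strict_right_mono) auto
  thus False using p1 p2 by linarith
qed


definition DD :: "(nat\<Rightarrow>nat\<Rightarrow>nat\<Rightarrow>real) \<Rightarrow> nat \<Rightarrow> real \<Rightarrow> real \<Rightarrow> real" where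
  "DD g l x y = g 1 1 l * g 2 2 l - x * y * g 1 2 l * g 2 1 l"
definition C1 :: "(nat\<Rightarrow>nat\<Rightarrow>nat\<Rightarrow>real) \<Rightarrow> real \<Rightarrow> real \<Rightarrow> nat \<Rightarrow> real \<Rightarrow> real \<Rightarrow> real" where
  "C1 g s P l x y = P * DD g l x y - s * x*(g 2 2 l + y * g 2 1 l)"
definition C2 :: "(nat\<Rightarrow>nat\<Rightarrow>nat\<Rightarrow>real) \<Rightarrow> real \<Rightarrow> real \<Rightarrow> nat \<Rightarrow> real \<Rightarrow> real \<Rightarrow> real" where
  "C2 g s P l x y = P * DD g l x y - s * y*(g 1 1 l + x * g 1 2 l)"
definition Apow :: "(nat\<Rightarrow>nat\<Rightarrow>nat\<Rightarrow>real) \<Rightarrow> real \<Rightarrow> nat \<Rightarrow> real \<Rightarrow> real \<Rightarrow> real" where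
  "Apow g s l x y = s * x*(g 2 2 l + y * g 2 1 l) / DD g l x y"
definition Bpow :: "(nat\<Rightarrow>nat\<Rightarrow>nat\<Rightarrow>real) \<Rightarrow> real \<Rightarrow> nat \<Rightarrow> real \<Rightarrow> real \<Rightarrow> real" where
  "Bpow g s l x y = s * y*(g 1 1 l + x * g 1 2 l) / DD g l x y"
definition Sset :: "nat \<Rightarrow> (nat\<Rightarrow>nat\<Rightarrow>nat\<Rightarrow>real) \<Rightarrow> real \<Rightarrow> real \<Rightarrow> (real\<times>real) set" where
  "Sset L g s P = {z. 0 \<le> fst z \<and> 0 \<le> snd z \<and>
     (\<forall>l\<in>{1..L}. 0 \<le> C1 g s P l (fst z) (snd z) \<and> 0 \<le> C2 g s P l (fst z) (snd z))}"
definition pw :: "(nat\<Rightarrow>nat\<Rightarrow>nat\<Rightarrow>real) \<Rightarrow> real \<Rightarrow> real \<Rightarrow> real \<Rightarrow> nat \<Rightarrow> nat \<Rightarrow> real" where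
  "pw g s x y = (\<lambda>i k. if i = 1 then Apow g s (k+1) x y else Bpow g s (k+1) x y)"
definition FF :: "real \<Rightarrow> real \<Rightarrow> real" where
  "FF x y = log 2 (1+x) + log 2 (1+y)"

lemma sinr1: "sinr g s p 1 l = p 1 (l-1) * g 1 1 l / (s + p 2 (l-1) * g 2 1 l)"
  by (simp add: sinr_def other_user_def)
lemma sinr2: "sinr g s p 2 l = p 2 (l-1) * g 2 2 l / (s + p 1 (l-1) * g 1 2 l)"
  by (simp add: sinr_def other_user_def)

lemma sum_rate_FF: "sum_rate L g s q = FF (e2e_sinr L g s q 1) (e2e_sinr L g s q 2)"
  by (simp add: sum_rate_def FF_def)

lemma nec:
  assumes gp: "\<And>j i l. j \<in> {1,2} \<Longrightarrow> i \<in> {1,2} \<Longrightarrow> l \<in> {1..L} \<Longrightarrow> g j i l > 0"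
    and s: "s > 0" and L: "L \<ge> 1" and f: "feasible L P q"
  shows "(e2e_sinr L g s q 1, e2e_sinr L g s q 2) \<in> Sset L g s P"
proof -
  let ?x = "e2e_sinr L g s q 1" and ?y = "e2e_sinr L g s q 2"
  have ne: "(\<lambda>l. sinr g s q i l) ` {1..L} \<noteq> {}" for i using L by auto
  have qb: "0 \<le> q i (l-1) \<and> q i (l-1) \<le> P" if "i\<in>{1,2}" "l\<in>{1..L}" for i l
    using f that unfolding feasible_def by auto
  have sp: "0 \<le> sinr g s q i l" if "i\<in>{1,2}" "l\<in>{1..L}" for i l
  proof -
    have "0 \<le> q 1 (l-1)" "0 \<le> q 2 (l-1)" using qb that by auto
    moreover have "g 1 1 l > 0" "g 2 1 l > 0" "g 2 2 l > 0" "g 1 2 l > 0" using gp that by auto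
    ultimately show ?thesis using that s unfolding sinr_def other_user_def
      by (auto intro!: divide_nonneg_pos add_pos_nonneg)
  qed
  have le: "e2e_sinr L g s q i \<le> sinr g s q i l" if "l\<in>{1..L}" for i l
    unfolding e2e_sinr_def using that by (intro Min_le) auto
  have ge: "0 \<le> e2e_sinr L g s q i" if "i\<in>{1,2}" for i
    unfolding e2e_sinr_def using ne sp that by (subst Min_ge_iff) auto
  have "0 \<le> C1 g s P l ?x ?y \<and> 0 \<le> C2 g s P l ?x ?y" if l: "l\<in>{1..L}" for l
  proof -
    have g4: "g 1 1 l > 0" "g 1 2 l > 0" "g 2 1 l > 0" "g 2 2 l > 0" using gp l by auto
    have h1: "?x \<le> q 1 (l-1) * g 1 1 l / (s + q 2 (l-1) * g 2 1 l)"
      using le[OF l, of 1] by (simp only: sinr1)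
    have h2: "?y \<le> q 2 (l-1) * g 2 2 l / (s + q 1 (l-1) * g 1 2 l)"
      using le[OF l, of 2] by (simp only: sinr2)
    show ?thesis
      using hop_nec[OF g4 s _ _ _ _ ge[of 1] ge[of 2] h1 h2] qb[of 1 l] qb[of 2 l] l
      unfolding C1_def C2_def DD_def by auto
  qed
  thus ?thesis unfolding Sset_def using ge by auto
qed

lemma suff:
  assumes gp: "\<And>j i l. j \<in> {1,2} \<Longrightarrow> i \<in> {1,2} \<Longrightarrow> l \<in> {1..L} \<Longrightarrow> g j i l > 0"
    and s: "s > 0" and P: "P > 0" and z: "(x,y) \<in> Sset L g s P"
  shows "feasible L P (pw g s x y)"
    and "\<And>l. l \<in> {1..L} \<Longrightarrow> sinr g s (pw g s x y) 1 l = x \<and> sinr g s (pw g s x y) 2 l = y"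
    and "\<And>l. l \<in> {1..L} \<Longrightarrow> DD g l x y > 0"
proof -
  have xy: "0 \<le> x" "0 \<le> y" using z unfolding Sset_def by auto
  have H: "0\<le>Apow g s l x y \<and> Apow g s l x y\<le>P \<and> 0\<le>Bpow g s l x y \<and> Bpow g s l x y\<le>P
     \<and> Apow g s l x y * g 1 1 l/(s+Bpow g s l x y * g 2 1 l) = x
     \<and> Bpow g s l x y * g 2 2 l/(s+Apow g s l x y * g 1 2 l) = y
     \<and> DD g l x y > 0"
    if l: "l\<in>{1..L}" for l
  proof -
    have g4: "g 1 1 l > 0" "g 1 2 l > 0" "g 2 1 l > 0" "g 2 2 l > 0" using gp l by auto
    have c: "0 \<le> C1 g s P l x y" "0 \<le> C2 g s P l x y" using z l unfolding Sset_def by auto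
    show ?thesis
      using hop_suff[OF g4 s P xy, of "Apow g s l x y" "Bpow g s l x y"]
        hop_D[OF g4 s P xy] c
      unfolding C1_def C2_def DD_def Apow_def Bpow_def by auto
  qed
  show "feasible L P (pw g s x y)" unfolding feasible_def pw_def
  proof (intro ballI allI impI)
    fix i k assume "i\<in>{1,2::nat}" "k<L"
    hence "Suc k \<in> {1..L}" by auto
    thus "0 \<le> (if i = 1 then Apow g s (k+1) x y else Bpow g s (k+1) x y) \<and>
          (if i = 1 then Apow g s (k+1) x y else Bpow g s (k+1) x y) \<le> P"
      using H by auto
  qed
  fix l assume l: "l \<in> {1..L}"
  hence e: "l - 1 + 1 = l" by auto
  show "sinr g s (pw g s x y) 1 l = x \<and> sinr g s (pw g s x y) 2 l = y"
    using H[OF l] unfolding sinr1 sinr2 pw_def e by simp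
  show "DD g l x y > 0" using H[OF l] by simp
qed


lemma S_closed: "closed (Sset L g s P)"
proof -
  have "Sset L g s P = {z. 0 \<le> fst z} \<inter> {z. 0 \<le> snd z} \<inter>
     (\<Inter>l\<in>{1..L}. {z. 0 \<le> C1 g s P l (fst z) (snd z)} \<inter> {z. 0 \<le> C2 g s P l (fst z) (snd z)})"
    unfolding Sset_def by auto
  also have "closed \<dots>"
    unfolding C1_def C2_def DD_def
    by (intro closed_Int closed_INT ballI closed_Collect_le continuous_intros)
  finally show ?thesis .
qed

lemma S_bounded:
  assumes gp: "\<And>j i l. j \<in> {1,2} \<Longrightarrow> i \<in> {1,2} \<Longrightarrow> l \<in> {1..L} \<Longrightarrow> g j i l > 0"
    and s: "s > 0" and P: "P > 0" and L: "L \<ge> 1"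
  shows "Sset L g s P \<subseteq> {0..P * g 1 1 1/s} \<times> {0..P * g 2 2 1/s}"
proof
  fix z assume z: "z \<in> Sset L g s P"
  obtain x y where zz: "z = (x,y)" by force
  have xy: "0\<le>x" "0\<le>y" using z zz unfolding Sset_def by auto
  have l1: "1 \<in> {1..L}" using L by auto
  have g4: "g 1 1 1 > 0" "g 1 2 1 > 0" "g 2 1 1 > 0" "g 2 2 1 > 0" using gp l1 by auto
  have c: "0 \<le> C1 g s P 1 x y" "0 \<le> C2 g s P 1 x y" using z zz l1 unfolding Sset_def by auto
  have pD: "P * DD g 1 x y \<le> P * (g 1 1 1 * g 2 2 1)"
    using P xy g4 unfolding DD_def by (intro mult_left_mono) auto
  have "s * x * g 2 2 1 \<le> s * x*(g 2 2 1 + y * g 2 1 1)"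
    using s xy g4 by (intro mult_left_mono) auto
  hence "(s * x) * g 2 2 1 \<le> (P * g 1 1 1) * g 2 2 1" using c(1) pD unfolding C1_def by (simp add: algebra_simps)
  hence "s * x \<le> P * g 1 1 1" using g4 by simp
  hence hx: "x \<le> P * g 1 1 1/s" using s by (simp add: field_simps)
  have "s * y * g 1 1 1 \<le> s * y*(g 1 1 1 + x * g 1 2 1)"
    using s xy g4 by (intro mult_left_mono) auto
  hence "(s * y) * g 1 1 1 \<le> (P * g 2 2 1) * g 1 1 1" using c(2) pD unfolding C2_def by (simp add: algebra_simps)
  hence "s * y \<le> P * g 2 2 1" using g4 by simp
  hence hy: "y \<le> P * g 2 2 1/s" using s by (simp add: field_simps)
  show "z \<in> {0..P * g 1 1 1/s} \<times> {0..P * g 2 2 1/s}" using zz xy hx hy by auto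
qed

lemma exists_max:
  assumes gp: "\<And>j i l. j \<in> {1,2} \<Longrightarrow> i \<in> {1,2} \<Longrightarrow> l \<in> {1..L} \<Longrightarrow> g j i l > 0"
    and s: "s > 0" and P: "P > 0" and L: "L \<ge> 1"
  shows "\<exists>z\<in>Sset L g s P. \<forall>w\<in>Sset L g s P. FF (fst w) (snd w) \<le> FF (fst z) (snd z)"
proof (rule continuous_attains_sup)
  show "compact (Sset L g s P)"
    using S_closed bounded_subset[OF compact_imp_bounded[OF compact_Times[OF compact_Icc compact_Icc]]
        S_bounded[OF gp s P L]]
    by (simp add: compact_eq_bounded_closed)
  have "(0,0) \<in> Sset L g s P" unfolding Sset_def C1_def C2_def DD_def
    using gp P by (auto intro!: mult_nonneg_nonneg less_imp_le)
  thus "Sset L g s P \<noteq> {}" by auto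
  show "continuous_on (Sset L g s P) (\<lambda>w. FF (fst w) (snd w))"
    unfolding FF_def log_def
    by (intro continuous_intros) (auto simp: Sset_def)
qed

lemma e2e_pw:
  assumes gp: "\<And>j i l. j \<in> {1,2} \<Longrightarrow> i \<in> {1,2} \<Longrightarrow> l \<in> {1..L} \<Longrightarrow> g j i l > 0"
    and s: "s > 0" and P: "P > 0" and L: "L \<ge> 1" and z: "(x,y) \<in> Sset L g s P"
  shows "e2e_sinr L g s (pw g s x y) 1 = x" "e2e_sinr L g s (pw g s x y) 2 = y"
proof -
  have "(\<lambda>l. sinr g s (pw g s x y) 1 l) ` {1..L} = {x}"
    using suff(2)[OF gp s P z] L by auto
  thus "e2e_sinr L g s (pw g s x y) 1 = x" unfolding e2e_sinr_def by simp
  have "(\<lambda>l. sinr g s (pw g s x y) 2 l) ` {1..L} = {y}"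
    using suff(2)[OF gp s P z] L by auto
  thus "e2e_sinr L g s (pw g s x y) 2 = y" unfolding e2e_sinr_def by simp
qed



lemma curve_contra:
  fixes K s r c b0 :: real
  assumes "K>0" "s>0" "r>0" "c>0" "0<b0"
    and ev: "\<exists>d>0. \<forall>b. b \<noteq> b0 \<and> dist b b0 < d \<longrightarrow>
         (1+K/(s+r * b)) * (1+c * b) \<le> (1+K/(s+r * b0)) * (1+c * b0)"
  shows False
proof -
  obtain d where d: "d>0" and h: "\<And>b. b \<noteq> b0 \<Longrightarrow> dist b b0 < d \<Longrightarrow>
         (1+K/(s+r * b)) * (1+c * b) \<le> (1+K/(s+r * b0)) * (1+c * b0)" using ev by blast
  define e where "e = min (d/2) (b0/2)"
  have e: "0 < e" "e < b0" "e < d" using d assms unfolding e_def by auto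
  show False
    by (rule curve_step[OF assms(1-4) e(1) e(2)])
       (rule h; use e in \<open>auto simp: dist_real_def\<close>)+
qed

lemma FF_le:
  fixes u v u' v' :: real
  assumes "0\<le>u" "0\<le>v" "0\<le>u'" "0\<le>v'" "FF u v \<le> FF u' v'"
  shows "(1+u) * (1+v) \<le> (1+u') * (1+v')"
proof -
  have "log 2 ((1+u) * (1+v)) \<le> log 2 ((1+u') * (1+v'))"
    using assms by (simp add: FF_def log_mult)
  thus ?thesis using assms by (subst (asm) log_le_cancel_iff) (auto intro: mult_pos_pos)
qed

lemma bin:
  assumes gp: "\<And>j i l. j \<in> {1,2} \<Longrightarrow> i \<in> {1,2} \<Longrightarrow> l \<in> {1..L} \<Longrightarrow> g j i l > 0"
    and s: "s > 0" and P: "P > 0" and L: "L \<ge> 2" and z: "(x,y) \<in> Sset L g s P"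
    and mx: "\<forall>w\<in>Sset L g s P. FF (fst w) (snd w) \<le> FF x y"
  shows "card (binary_entries L P (pw g s x y)) \<ge> 2"
proof -
  define B where "B = binary_entries L P (pw g s x y)"
  have fin: "finite B"
    by (rule finite_subset[of _ "{1,2} \<times> {..<L}"]) (auto simp: B_def binary_entries_def)
  have two: "2 \<le> card B" if "e1 \<in> B" "e2 \<in> B" "e1 \<noteq> e2" for e1 e2
  proof -
    have "card {e1,e2} \<le> card B" using that fin by (intro card_mono) auto
    thus ?thesis using that by simp
  qed
  have xy: "0\<le>x" "0\<le>y" using z unfolding Sset_def by auto
  have cz: "0 \<le> C1 g s P l x y" "0 \<le> C2 g s P l x y" if "l\<in>{1..L}" for l
    using z that unfolding Sset_def by auto
  have Dp: "DD g l x y > 0" if "l\<in>{1..L}" for l using suff(3)[OF gp s P z that] .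
  have pw1: "pw g s x y 1 (l-1) = Apow g s l x y" "pw g s x y 2 (l-1) = Bpow g s l x y"
    if "l\<in>{1..L}" for l using that by (auto simp: pw_def)
  have inA: "(1, l-1) \<in> B" if l: "l\<in>{1..L}" "C1 g s P l x y = 0" for l
  proof -
    have "s * x * (g 2 2 l + y * g 2 1 l) = P * DD g l x y" using l(2) unfolding C1_def by simp
    hence "Apow g s l x y = P" using Dp[OF l(1)] unfolding Apow_def by simp
    thus ?thesis using l pw1[OF l(1)] P unfolding B_def binary_entries_def by auto
  qed
  have inB: "(2, l-1) \<in> B" if l: "l\<in>{1..L}" "C2 g s P l x y = 0" for l
  proof -
    have "s * y * (g 1 1 l + x * g 1 2 l) = P * DD g l x y" using l(2) unfolding C2_def by simp
    hence "Bpow g s l x y = P" using Dp[OF l(1)] unfolding Bpow_def by simp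
    thus ?thesis using l pw1[OF l(1)] P unfolding B_def binary_entries_def by auto
  qed
  have l12: "1 \<in> {1..L}" "2 \<in> {1..L}" using L by auto
  have "2 \<le> card B"
  proof (cases "x = 0 \<or> y = 0")
    case True
    thus ?thesis
    proof
      assume x0: "x = 0"
      have "(1, 0) \<in> B" "(1,1) \<in> B"
        using pw1(1)[OF l12(1)] pw1(1)[OF l12(2)] L x0
        unfolding B_def binary_entries_def Apow_def by auto
      thus ?thesis using two[of "(1,0)" "(1,1)"] by simp
    next
      assume y0: "y = 0"
      have "(2, 0) \<in> B" "(2,1) \<in> B"
        using pw1(2)[OF l12(1)] pw1(2)[OF l12(2)] L y0
        unfolding B_def binary_entries_def Bpow_def by auto
      thus ?thesis using two[of "(2,0)" "(2,1)"] by simp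
    qed
  next
    case False
    hence xp: "x > 0" and yp: "y > 0" using xy by auto
    show ?thesis
    proof (rule ccontr)
      assume nc: "\<not> 2 \<le> card B"
      have uniq: "e1 = e2" if "e1 \<in> B" "e2 \<in> B" for e1 e2
        using two[OF that] nc by blast
      have ne1: "C1 g s P l x y > 0 \<and> C2 g s P l x y > 0"
        if l: "l \<in> {1..L}" "l \<noteq> l0" and l0: "l0 \<in> {1..L}" and e0: "(i0, l0-1) \<in> B" for l l0 i0
      proof -
        have "C1 g s P l x y \<noteq> 0"
        proof
          assume "C1 g s P l x y = 0"
          hence "(1, l-1) \<in> B" using inA l by blast
          hence "(1, l-1) = (i0, l0-1)" using uniq[OF _ e0] by blast
          thus False using l l0 by auto
        qed
        moreover have "C2 g s P l x y \<noteq> 0"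
        proof
          assume "C2 g s P l x y = 0"
          hence "(2, l-1) \<in> B" using inB l by blast
          hence "(2, l-1) = (i0, l0-1)" using uniq[OF _ e0] by blast
          thus False using l l0 by auto
        qed
        ultimately show ?thesis using cz[OF l(1)] by auto
      qed
      have contC: "isCont (\<lambda>b. C1 g s P l (X b) (Y b)) b0 \<and> isCont (\<lambda>b. C2 g s P l (X b) (Y b)) b0"
        if "isCont X b0" "isCont Y b0" for l X Y b0
        unfolding C1_def C2_def DD_def using that by (intro conjI continuous_intros) auto
      have caseA: False if l0: "l0\<in>{1..L}" "C1 g s P l0 x y = 0" for l0
      proof -
        have e0: "(1, l0-1) \<in> B" using inA l0 by blast
        have C2p: "C2 g s P l0 x y > 0"
        proof -
          have "C2 g s P l0 x y \<noteq> 0"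
          proof
            assume "C2 g s P l0 x y = 0"
            hence "(2, l0-1) \<in> B" using inB l0 by blast
            hence "(2::nat, l0-1) = (1, l0-1)" by (rule uniq[OF _ e0])
            thus False by simp
          qed
          thus ?thesis using cz[OF l0(1)] by auto
        qed
        have g4: "g 1 1 l0 > 0" "g 1 2 l0 > 0" "g 2 1 l0 > 0" "g 2 2 l0 > 0" using gp l0 by auto
        define b0 where "b0 = Bpow g s l0 x y"
        have aP: "Apow g s l0 x y = P"
        proof -
          have "s * x * (g 2 2 l0 + y * g 2 1 l0) = P * DD g l0 x y" using l0(2) unfolding C1_def by simp
          thus ?thesis using Dp[OF l0(1)] unfolding Apow_def by simp
        qed
        have sx: "P * g 1 1 l0 / (s + b0 * g 2 1 l0) = x" "b0 * g 2 2 l0 / (s + P * g 1 2 l0) = y"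
          using suff(2)[OF gp s P z l0(1)] pw1[OF l0(1)] aP unfolding sinr1 sinr2 b0_def by auto
        have b0p: "b0 > 0"
        proof -
          have "s * y * (g 1 1 l0 + x * g 1 2 l0) > 0" using s yp xy g4
            by (intro mult_pos_pos add_pos_nonneg) auto
          thus ?thesis using Dp[OF l0(1)] unfolding b0_def Bpow_def by simp
        qed
        have b0P: "b0 < P"
          using C2p Dp[OF l0(1)] unfolding b0_def Bpow_def C2_def by (simp add: divide_less_eq)
        define K where "K = P * g 1 1 l0"
        define cc where "cc = g 2 2 l0 / (s + P * g 1 2 l0)"
        define X where "X = (\<lambda>b. K / (s + g 2 1 l0 * b))"
        define Y where "Y = (\<lambda>b. cc * b)"
        have Kp: "K > 0" "cc > 0" unfolding K_def cc_def using P g4 s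
          by (auto intro!: divide_pos_pos add_pos_pos)
        have X0: "X b0 = x" using sx(1) unfolding X_def K_def by (simp add: mult.commute)
        have Y0: "Y b0 = y" using sx(2) unfolding Y_def cc_def by (simp add: mult.commute)
        have dpos: "s + g 2 1 l0 * b0 > 0" using s g4 b0p by (simp add: add_pos_pos)
        have cX: "isCont X b0" unfolding X_def using dpos
          by (intro continuous_intros) auto
        have cY: "isCont Y b0" unfolding Y_def by (intro continuous_intros)
        have ev: "eventually (\<lambda>b. 0 < b \<and> b < P \<and>
           (\<forall>l\<in>{1..L}-{l0}. 0 < C1 g s P l (X b) (Y b) \<and> 0 < C2 g s P l (X b) (Y b))) (at b0)"
        proof (intro eventually_conj eventually_ball_finite ballI)
          show "eventually (\<lambda>b. 0 < b) (at b0)"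
            by (rule order_tendstoD(1)[OF tendsto_ident_at b0p])
          show "eventually (\<lambda>b. b < P) (at b0)"
            by (rule order_tendstoD(2)[OF tendsto_ident_at b0P])
          show "finite ({1..L}-{l0})" by simp
          fix l assume l: "l \<in> {1..L}-{l0}"
          have pos: "C1 g s P l x y > 0 \<and> C2 g s P l x y > 0" using ne1[of l l0 1] l l0 e0 by auto
          have t: "((\<lambda>b. C1 g s P l (X b) (Y b)) \<longlongrightarrow> C1 g s P l x y) (at b0)"
               "((\<lambda>b. C2 g s P l (X b) (Y b)) \<longlongrightarrow> C2 g s P l x y) (at b0)"
            using contC[OF cX cY, of l] X0 Y0 by (auto simp: isCont_def)
          show "eventually (\<lambda>b. 0 < C1 g s P l (X b) (Y b)) (at b0)"
            using order_tendstoD(1)[OF t(1)] pos by auto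
          show "eventually (\<lambda>b. 0 < C2 g s P l (X b) (Y b)) (at b0)"
            using order_tendstoD(1)[OF t(2)] pos by auto
        qed
        then obtain d where d: "d > 0" and dH: "\<And>b. b \<noteq> b0 \<Longrightarrow> dist b b0 < d \<Longrightarrow> 0 < b \<and> b < P \<and>
           (\<forall>l\<in>{1..L}-{l0}. 0 < C1 g s P l (X b) (Y b) \<and> 0 < C2 g s P l (X b) (Y b))"
          unfolding eventually_at by auto
        show False
        proof (rule curve_contra[OF Kp(1) s g4(3) Kp(2) b0p])
          show "\<exists>d>0. \<forall>b. b \<noteq> b0 \<and> dist b b0 < d \<longrightarrow>
             (1+K/(s+g 2 1 l0 * b)) * (1+cc * b) \<le> (1+K/(s+g 2 1 l0 * b0)) * (1+cc * b0)"
          proof (intro exI[of _ d] conjI allI impI d)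
            fix b assume bb: "b \<noteq> b0 \<and> dist b b0 < d"
            note H = dH[OF bb[THEN conjunct1] bb[THEN conjunct2]]
            have Xn: "0 \<le> X b" "0 \<le> Y b" unfolding X_def Y_def using Kp H s g4
              by (auto intro!: divide_nonneg_pos add_pos_nonneg)
            have l0c: "0 \<le> C1 g s P l0 (X b) (Y b) \<and> 0 \<le> C2 g s P l0 (X b) (Y b)"
              using hop_nec[OF g4 s, of P P b "X b" "Y b"] H Xn P
              unfolding C1_def C2_def DD_def X_def Y_def K_def cc_def
              by (auto simp: mult.commute)
            have allc: "0 \<le> C1 g s P l (X b) (Y b) \<and> 0 \<le> C2 g s P l (X b) (Y b)"
              if l: "l \<in> {1..L}" for l
            proof (cases "l = l0")
              case True thus ?thesis using l0c by simp
            next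
              case False
              hence "l \<in> {1..L}-{l0}" using l by simp
              hence "0 < C1 g s P l (X b) (Y b) \<and> 0 < C2 g s P l (X b) (Y b)" using H by blast
              thus ?thesis by simp
            qed
            have "(X b, Y b) \<in> Sset L g s P"
              unfolding Sset_def using Xn allc by simp
            hence "FF (X b) (Y b) \<le> FF (X b0) (Y b0)" using mx X0 Y0 by force
            hence "(1 + X b) * (1 + Y b) \<le> (1 + X b0) * (1 + Y b0)"
              using FF_le Xn xy X0 Y0 by auto
            thus "(1+K/(s+g 2 1 l0 * b)) * (1+cc * b) \<le> (1+K/(s+g 2 1 l0 * b0)) * (1+cc * b0)"
              unfolding X_def Y_def .
          qed
        qed
      qed
      have caseB: False if l0: "l0\<in>{1..L}" "C2 g s P l0 x y = 0" for l0
      proof -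
        have e0: "(2, l0-1) \<in> B" using inB l0 by blast
        have C1p: "C1 g s P l0 x y > 0"
        proof -
          have "C1 g s P l0 x y \<noteq> 0"
          proof
            assume "C1 g s P l0 x y = 0"
            hence "(1, l0-1) \<in> B" using inA l0 by blast
            hence "(1::nat, l0-1) = (2, l0-1)" by (rule uniq[OF _ e0])
            thus False by simp
          qed
          thus ?thesis using cz[OF l0(1)] by auto
        qed
        have g4: "g 1 1 l0 > 0" "g 1 2 l0 > 0" "g 2 1 l0 > 0" "g 2 2 l0 > 0" using gp l0 by auto
        define b0 where "b0 = Apow g s l0 x y"
        have aP: "Bpow g s l0 x y = P"
        proof -
          have "s * y * (g 1 1 l0 + x * g 1 2 l0) = P * DD g l0 x y" using l0(2) unfolding C2_def by simp
          thus ?thesis using Dp[OF l0(1)] unfolding Bpow_def by simp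
        qed
        have sx: "b0 * g 1 1 l0 / (s + P * g 2 1 l0) = x" "P * g 2 2 l0 / (s + b0 * g 1 2 l0) = y"
          using suff(2)[OF gp s P z l0(1)] pw1[OF l0(1)] aP unfolding sinr1 sinr2 b0_def by auto
        have b0p: "b0 > 0"
        proof -
          have "s * x * (g 2 2 l0 + y * g 2 1 l0) > 0" using s xp xy g4
            by (intro mult_pos_pos add_pos_nonneg) auto
          thus ?thesis using Dp[OF l0(1)] unfolding b0_def Apow_def by simp
        qed
        have b0P: "b0 < P"
          using C1p Dp[OF l0(1)] unfolding b0_def Apow_def C1_def by (simp add: divide_less_eq)
        define K where "K = P * g 2 2 l0"
        define cc where "cc = g 1 1 l0 / (s + P * g 2 1 l0)"
        define X where "X = (\<lambda>b. cc * b)"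
        define Y where "Y = (\<lambda>b. K / (s + g 1 2 l0 * b))"
        have Kp: "K > 0" "cc > 0" unfolding K_def cc_def using P g4 s
          by (auto intro!: divide_pos_pos add_pos_pos)
        have X0: "X b0 = x" using sx(1) unfolding X_def cc_def by (simp add: mult.commute)
        have Y0: "Y b0 = y" using sx(2) unfolding Y_def K_def by (simp add: mult.commute)
        have dpos: "s + g 1 2 l0 * b0 > 0" using s g4 b0p by (simp add: add_pos_pos)
        have cY: "isCont Y b0" unfolding Y_def using dpos
          by (intro continuous_intros) auto
        have cX: "isCont X b0" unfolding X_def by (intro continuous_intros)
        have ev: "eventually (\<lambda>b. 0 < b \<and> b < P \<and>
           (\<forall>l\<in>{1..L}-{l0}. 0 < C1 g s P l (X b) (Y b) \<and> 0 < C2 g s P l (X b) (Y b))) (at b0)"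
        proof (intro eventually_conj eventually_ball_finite ballI)
          show "eventually (\<lambda>b. 0 < b) (at b0)"
            by (rule order_tendstoD(1)[OF tendsto_ident_at b0p])
          show "eventually (\<lambda>b. b < P) (at b0)"
            by (rule order_tendstoD(2)[OF tendsto_ident_at b0P])
          show "finite ({1..L}-{l0})" by simp
          fix l assume l: "l \<in> {1..L}-{l0}"
          have pos: "C1 g s P l x y > 0 \<and> C2 g s P l x y > 0" using ne1[of l l0 2] l l0 e0 by auto
          have t: "((\<lambda>b. C1 g s P l (X b) (Y b)) \<longlongrightarrow> C1 g s P l x y) (at b0)"
               "((\<lambda>b. C2 g s P l (X b) (Y b)) \<longlongrightarrow> C2 g s P l x y) (at b0)"
            using contC[OF cX cY, of l] X0 Y0 by (auto simp: isCont_def)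
          show "eventually (\<lambda>b. 0 < C1 g s P l (X b) (Y b)) (at b0)"
            using order_tendstoD(1)[OF t(1)] pos by auto
          show "eventually (\<lambda>b. 0 < C2 g s P l (X b) (Y b)) (at b0)"
            using order_tendstoD(1)[OF t(2)] pos by auto
        qed
        then obtain d where d: "d > 0" and dH: "\<And>b. b \<noteq> b0 \<Longrightarrow> dist b b0 < d \<Longrightarrow> 0 < b \<and> b < P \<and>
           (\<forall>l\<in>{1..L}-{l0}. 0 < C1 g s P l (X b) (Y b) \<and> 0 < C2 g s P l (X b) (Y b))"
          unfolding eventually_at by auto
        show False
        proof (rule curve_contra[OF Kp(1) s g4(2) Kp(2) b0p])
          show "\<exists>d>0. \<forall>b. b \<noteq> b0 \<and> dist b b0 < d \<longrightarrow>
             (1+K/(s+g 1 2 l0 * b)) * (1+cc * b) \<le> (1+K/(s+g 1 2 l0 * b0)) * (1+cc * b0)"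
          proof (intro exI[of _ d] conjI allI impI d)
            fix b assume bb: "b \<noteq> b0 \<and> dist b b0 < d"
            note H = dH[OF bb[THEN conjunct1] bb[THEN conjunct2]]
            have Xn: "0 \<le> X b" "0 \<le> Y b" unfolding X_def Y_def using Kp H s g4
              by (auto intro!: divide_nonneg_pos add_pos_nonneg)
            have hx: "X b \<le> b * g 1 1 l0 / (s + P * g 2 1 l0)" unfolding X_def cc_def by (simp add: mult.commute)
            have hy: "Y b \<le> P * g 2 2 l0 / (s + b * g 1 2 l0)" unfolding Y_def K_def by (simp add: mult.commute)
            have l0c: "0 \<le> C1 g s P l0 (X b) (Y b) \<and> 0 \<le> C2 g s P l0 (X b) (Y b)"
              using hop_nec[OF g4 s _ _ _ _ Xn hx hy] H P
              unfolding C1_def C2_def DD_def by auto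
            have allc: "0 \<le> C1 g s P l (X b) (Y b) \<and> 0 \<le> C2 g s P l (X b) (Y b)"
              if l: "l \<in> {1..L}" for l
            proof (cases "l = l0")
              case True thus ?thesis using l0c by simp
            next
              case False
              hence "l \<in> {1..L}-{l0}" using l by simp
              hence "0 < C1 g s P l (X b) (Y b) \<and> 0 < C2 g s P l (X b) (Y b)" using H by blast
              thus ?thesis by simp
            qed
            have "(X b, Y b) \<in> Sset L g s P"
              unfolding Sset_def using Xn allc by simp
            hence "FF (X b) (Y b) \<le> FF (X b0) (Y b0)" using mx X0 Y0 by force
            hence "(1 + X b) * (1 + Y b) \<le> (1 + X b0) * (1 + Y b0)"
              using FF_le Xn xy X0 Y0 by auto
            thus "(1+K/(s+g 1 2 l0 * b)) * (1+cc * b) \<le> (1+K/(s+g 1 2 l0 * b0)) * (1+cc * b0)"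
              unfolding X_def Y_def by (simp only: mult.commute)
          qed
        qed
      qed
      have caseC: False if allp: "\<forall>l\<in>{1..L}. 0 < C1 g s P l x y \<and> 0 < C2 g s P l x y"
      proof -
        have ev: "eventually (\<lambda>e. \<forall>l\<in>{1..L}. 0 < C1 g s P l (x+e) y \<and> 0 < C2 g s P l (x+e) y) (at (0::real))"
        proof (intro eventually_ball_finite ballI eventually_conj)
          show "finite {1..L}" by simp
          fix l assume l: "l \<in> {1..L}"
          have cX: "isCont (\<lambda>e. x + e) 0" "isCont (\<lambda>e. y) (0::real)" by (intro continuous_intros)+
          have t: "((\<lambda>e. C1 g s P l (x+e) y) \<longlongrightarrow> C1 g s P l x y) (at 0)"
               "((\<lambda>e. C2 g s P l (x+e) y) \<longlongrightarrow> C2 g s P l x y) (at 0)"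
            using contC[OF cX] by (auto simp: isCont_def)
          show "eventually (\<lambda>e. 0 < C1 g s P l (x+e) y) (at 0)"
            using order_tendstoD(1)[OF t(1)] allp l by auto
          show "eventually (\<lambda>e. 0 < C2 g s P l (x+e) y) (at 0)"
            using order_tendstoD(1)[OF t(2)] allp l by auto
        qed
        then obtain d where d: "d > 0" and dH: "\<And>e. e \<noteq> 0 \<Longrightarrow> dist e 0 < d \<Longrightarrow>
           (\<forall>l\<in>{1..L}. 0 < C1 g s P l (x+e) y \<and> 0 < C2 g s P l (x+e) y)"
          unfolding eventually_at by auto
        define e where "e = d/2"
        have e: "e > 0" "e \<noteq> 0" "dist e 0 < d" using d unfolding e_def by (auto simp: dist_real_def)
        note H = dH[OF e(2) e(3)]
        have "(x+e, y) \<in> Sset L g s P"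
          unfolding Sset_def using H xy e by (auto intro: less_imp_le)
        hence "FF (x+e) y \<le> FF x y" using mx by force
        moreover have "log 2 (1+x) < log 2 (1+(x+e))" using xy e by simp
        ultimately show False unfolding FF_def by simp
      qed
      show False
      proof (cases "\<exists>l0\<in>{1..L}. C1 g s P l0 x y = 0 \<or> C2 g s P l0 x y = 0")
        case True
        then obtain l0 where "l0\<in>{1..L}" "C1 g s P l0 x y = 0 \<or> C2 g s P l0 x y = 0" by blast
        thus False using caseA caseB by blast
      next
        case False
        hence "\<forall>l\<in>{1..L}. 0 < C1 g s P l x y \<and> 0 < C2 g s P l x y"
          using cz by (auto simp: less_le)
        thus False by (rule caseC)
      qed
    qed
  qed
  thus ?thesis unfolding B_def .
qed

theorem theorem1:
  fixes L :: nat and P \<sigma>2 :: real and g :: "nat \<Rightarrow> nat \<Rightarrow> nat \<Rightarrow> real"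
  assumes "L \<ge> 2" and "P > 0" and "\<sigma>2 > 0"
    and "\<And>j i l. j \<in> {1,2} \<Longrightarrow> i \<in> {1,2} \<Longrightarrow> l \<in> {1..L} \<Longrightarrow> g j i l > 0"
  shows "\<exists>p. feasible L P p
            \<and> (\<forall>q. feasible L P q \<longrightarrow> sum_rate L g \<sigma>2 q \<le> sum_rate L g \<sigma>2 p)
            \<and> card (binary_entries L P p) \<ge> 2
            \<and> (\<forall>i\<in>{1,2}. \<forall>l\<in>{2..L}. sinr g \<sigma>2 p i 1 = sinr g \<sigma>2 p i l)"
proof -
  have L1: "L \<ge> 1" using assms(1) by simp
  obtain z where z: "z \<in> Sset L g \<sigma>2 P"
    and mx: "\<forall>w\<in>Sset L g \<sigma>2 P. FF (fst w) (snd w) \<le> FF (fst z) (snd z)"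
    using exists_max[where L=L and g=g and s="\<sigma>2" and P=P, OF assms(4) assms(3) assms(2) L1] by blast
  obtain x y where zz: "z = (x,y)" by force
  have zs: "(x,y) \<in> Sset L g \<sigma>2 P" using z zz by simp
  have mx': "\<forall>w\<in>Sset L g \<sigma>2 P. FF (fst w) (snd w) \<le> FF x y" using mx zz by simp
  let ?p = "pw g \<sigma>2 x y"
  have f: "feasible L P ?p" by (rule suff(1)[where L=L and g=g and s="\<sigma>2" and P=P, OF assms(4) assms(3) assms(2) zs])
  have opt: "sum_rate L g \<sigma>2 q \<le> sum_rate L g \<sigma>2 ?p" if q: "feasible L P q" for q
  proof -
    have "(e2e_sinr L g \<sigma>2 q 1, e2e_sinr L g \<sigma>2 q 2) \<in> Sset L g \<sigma>2 P"
      by (rule nec[where L=L and g=g and s="\<sigma>2" and P=P, OF assms(4) assms(3) L1 q])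
    hence "FF (e2e_sinr L g \<sigma>2 q 1) (e2e_sinr L g \<sigma>2 q 2) \<le> FF x y" using mx' by force
    thus ?thesis using e2e_pw[where L=L and g=g and s="\<sigma>2" and P=P, OF assms(4) assms(3) assms(2) L1 zs] by (simp add: sum_rate_FF)
  qed
  have c: "card (binary_entries L P ?p) \<ge> 2"
    by (rule bin[where L=L and g=g and s="\<sigma>2" and P=P, OF assms(4) assms(3) assms(2) assms(1) zs mx'])
  have m: "\<forall>i\<in>{1,2}. \<forall>l\<in>{2..L}. sinr g \<sigma>2 ?p i 1 = sinr g \<sigma>2 ?p i l"
  proof (intro ballI)
    fix i l assume i: "i \<in> {1,2::nat}" and l: "l \<in> {2..L}"
    have l1: "1 \<in> {1..L}" and l': "l \<in> {1..L}" using L1 l by auto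
    show "sinr g \<sigma>2 ?p i 1 = sinr g \<sigma>2 ?p i l"
      using suff(2)[where L=L and g=g and s="\<sigma>2" and P=P, OF assms(4) assms(3) assms(2) zs l1] suff(2)[where L=L and g=g and s="\<sigma>2" and P=P, OF assms(4) assms(3) assms(2) zs l'] i
      by auto
  qed
  show ?thesis using f opt c m by blast
qed

end
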